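(* Let $S$ be a standard quantum entity on a finite-dimensional complex Hilbert space $\mathcal{H}$ with set of states $\Sigma$. For $K\subseteq\Sigma$ let $L=\{c: p_{\bar c}\in K\}$. Then $K^\perp=\{p_{\bar c}: c\in L^\perp\}$ and $cl_{orth}(K)=\{p_{\bar c}: c\in cl(L)\}$, where $L^\perp$ is the orthogonal complement and $cl(L)=(L^\perp)^\perp$ the closed linear span of $L$ in $\mathcal{H}$. If $L$ is a closed subspace of $\mathcal{H}$ and $F=\{p_{\bar c}:c\in L\}$, then $F\in\mathcal{F}_{orth}$. Moreover $\mathcal{F}_{eig}=\mathcal{F}_{orth}$.
   Context: A spectral family of $\mathcal{H}$ is a set $E=\{E_1,\dots,E_r\}$ of pairwise orthogonal nonzero orthogonal projections with $\sum_kE_k=I$. The standard quantum entity has states $p_{\bar c}$ (one per ray $\bar c$, generated by a unit vector $c$), experiments $e_E$ (one per spectral family $E$), outcomes $x_{E_k}$ (one per orthogonal projection), and $O(e_E,p_{\bar c})=\{x_{E_k}:E_k\in E,E_kc\neq0\}$. State orthogonality: $p\perp q$ iff some experiment $e$ has $O(e,p)\cap O(e,q)=\emptyset$. For $K\subseteq\Sigma$, $K^\perp=\{p\in\Sigma:p\perp q\text{ for all }q\in K\}$, $cl_{orth}(K)=(K^\perp)^\perp$, and $\mathcal{F}_{orth}$ is the set of $K$ with $cl_{orth}(K)=K$. State eigen closure system: for an experiment $e$ with outcome set $O(e)=\bigcup_pO(e,p)$ and $A\subseteq O(e)$, $eig_e(A)=\{p: O(e,p)\subseteq A\}$; $\mathcal{F}_{eig}$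 is the set of all intersections of families of sets $eig_e(A)$ ($e$ ranging over experiments). *)

theory Defs
  imports "HOL-Analysis.Analysis"
begin

text \<open>The finite-dimensional complex Hilbert space is modelled as complex^'n
  ('n a finite index type), with the standard inner product (conjugate-linear
  in the first argument).\<close>

definition cinner :: "complex^'n::finite \<Rightarrow> complex^'n \<Rightarrow> complex" where
  "cinner x y = (\<Sum>i\<in>UNIV. cnj (x$i) * y$i)"

definition corth :: "(complex^'n::finite) set \<Rightarrow> (complex^'n) set" where
  "corth L = {x. \<forall>c\<in>L. cinner c x = 0}"

definition ccl :: "(complex^'n::finite) set \<Rightarrow> (complex^'n) set" where
  "ccl L = corth (corth L)"

definition csubspace :: "(complex^'n::finite) set \<Rightarrow> bool" where
  "csubspace L \<longleftrightarrow> 0 \<in> L \<and> (\<forall>x\<in>L. \<forall>y\<in>L. x + y \<in> L) \<and> (\<forall>z. \<forall>x\<in>L. z *s x \<in> L)"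

definition cadj :: "complex^'n::finite^'n \<Rightarrow> complex^'n^'n" where
  "cadj A = (\<chi> i j. cnj (A$j$i))"

definition orth_proj :: "complex^'n::finite^'n \<Rightarrow> bool" where
  "orth_proj P \<longleftrightarrow> P ** P = P \<and> cadj P = P"

definition spectral_family :: "(complex^'n::finite^'n) set \<Rightarrow> bool" where
  "spectral_family E \<longleftrightarrow> finite E \<and> (\<forall>P\<in>E. orth_proj P \<and> P \<noteq> 0)
     \<and> (\<forall>P\<in>E. \<forall>Q\<in>E. P \<noteq> Q \<longrightarrow> P ** Q = 0) \<and> sum id E = mat 1"

definition ray :: "complex^'n::finite \<Rightarrow> (complex^'n) set" where
  "ray c = {x. \<exists>z. z \<noteq> 0 \<and> x = z *s c}"

definition States :: "(complex^'n::finite) set set" where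
  "States = {ray c | c. c \<noteq> 0}"

text \<open>Outcome set of experiment e_E on state p: outcomes are identified with
  the projections in E.\<close>
definition Out :: "(complex^'n::finite^'n) set \<Rightarrow> (complex^'n) set \<Rightarrow> (complex^'n^'n) set" where
  "Out E p = {P\<in>E. \<exists>c\<in>p. P *v c \<noteq> 0}"

definition Out_exp :: "(complex^'n::finite^'n) set \<Rightarrow> (complex^'n^'n) set" where
  "Out_exp E = (\<Union>p\<in>States. Out E p)"

definition state_orth :: "(complex^'n::finite) set \<Rightarrow> (complex^'n) set \<Rightarrow> bool" where
  "state_orth p q \<longleftrightarrow> (\<exists>E. spectral_family E \<and> Out E p \<inter> Out E q = {})"

definition sorth :: "(complex^'n::finite) set set \<Rightarrow> (complex^'n) set set" where
  "sorth K = {p\<in>States. \<forall>q\<in>K. state_orth p q}"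

definition cl_orth :: "(complex^'n::finite) set set \<Rightarrow> (complex^'n) set set" where
  "cl_orth K = sorth (sorth K)"

definition F_orth :: "(complex^'n::finite) set set set" where
  "F_orth = {K. K \<subseteq> States \<and> cl_orth K = K}"

definition eig :: "(complex^'n::finite^'n) set \<Rightarrow> (complex^'n^'n) set \<Rightarrow> (complex^'n) set set" where
  "eig E A = {p\<in>States. Out E p \<subseteq> A}"

text \<open>Intersections of families of eigen sets (the empty family gives States).\<close>
definition F_eig :: "(complex^'n::finite) set set set" where
  "F_eig = {K. \<exists>\<F>. \<F> \<subseteq> {eig E A | E A. spectral_family E \<and> A \<subseteq> Out_exp E}
                 \<and> K = States \<inter> \<Inter>\<F>}"

end

theory Submission imports Defs begin

lemma cinner_zero_left[simp]: "cinner 0 x = 0" by (simp add: cinner_def)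
lemma cinner_zero_right[simp]: "cinner x 0 = 0" by (simp add: cinner_def)
lemma cinner_add_left: "cinner (x + y) z = cinner x z + cinner y z"
  by (simp add: cinner_def sum.distrib algebra_simps)
lemma cinner_add_right: "cinner z (x + y) = cinner z x + cinner z y"
  by (simp add: cinner_def sum.distrib algebra_simps)
lemma cinner_diff_right: "cinner z (x - y) = cinner z x - cinner z y"
  by (simp add: cinner_def sum_subtractf algebra_simps)
lemma cinner_scale_left: "cinner (a *s x) y = cnj a * cinner x y"
  by (simp add: cinner_def sum_distrib_left algebra_simps)
lemma cinner_scale_right: "cinner x (a *s y) = a * cinner x y"
  by (simp add: cinner_def sum_distrib_left algebra_simps)
lemma cinner_commute: "cinner y x = cnj (cinner x y)"
  by (simp add: cinner_def mult.commute)
lemma cinner_sum_right: "finite A \<Longrightarrow> cinner x (sum f A) = (\<Sum>a\<in>A. cinner x (f a))"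
  by (induction A rule: finite_induct) (auto simp: cinner_add_right)
lemma cinner_sum_left: "finite A \<Longrightarrow> cinner (sum f A) x = (\<Sum>a\<in>A. cinner (f a) x)"
  by (induction A rule: finite_induct) (auto simp: cinner_add_left)

lemma cinner_self_Re: "cinner x x = of_real (\<Sum>i\<in>UNIV. (cmod (x$i))^2)"
proof -
  have "\<And>i. cnj (x$i) * x$i = of_real ((cmod (x$i))^2)"
    by (metis complex_norm_square mult.commute)
  then show ?thesis by (simp add: cinner_def of_real_sum)
qed

lemma cinner_self_eq_0[simp]: "cinner x x = 0 \<longleftrightarrow> x = 0"
proof
  assume "cinner x x = 0"
  then have "(\<Sum>i\<in>UNIV. (cmod (x$i))^2) = 0" unfolding cinner_self_Re of_real_eq_0_iff .
  then have "\<forall>i\<in>UNIV. (cmod (x$i))^2 = 0" by (subst (asm) sum_nonneg_eq_0_iff) auto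
  then show "x = 0" by (simp add: vec_eq_iff)
qed simp

lemma inner_Re_cinner: "inner x y = Re (cinner x y)"
  by (simp add: inner_vec_def cinner_def Re_sum inner_complex_def)

lemma cinner_adj: "cinner (A *v x) y = cinner x (cadj A *v y)"
proof -
  have "cinner (A *v x) y = (\<Sum>i\<in>UNIV. \<Sum>j\<in>UNIV. cnj (A$i$j) * cnj (x$j) * y$i)"
    by (simp add: cinner_def matrix_vector_mult_def sum_distrib_right)
  also have "\<dots> = (\<Sum>j\<in>UNIV. \<Sum>i\<in>UNIV. cnj (A$i$j) * cnj (x$j) * y$i)"
    by (rule sum.swap)
  also have "\<dots> = cinner x (cadj A *v y)"
    by (simp add: cinner_def cadj_def matrix_vector_mult_def sum_distrib_left algebra_simps)
  finally show ?thesis .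
qed


lemma mat_eqI: "(\<And>x. A *v x = B *v x) \<Longrightarrow> (A::'a::semiring_1^'n^'m) = B"
  using matrix_eq by blast

definition pr :: "complex^'n::finite \<Rightarrow> complex^'n^'n" where
  "pr d = (\<chi> i j. d$i * cnj (d$j) / cinner d d)"

lemma pr_mult: "pr d *v x = (cinner d x / cinner d d) *s d"
  by (simp add: vec_eq_iff pr_def matrix_vector_mult_def cinner_def sum_distrib_left
      sum_distrib_right sum_divide_distrib algebra_simps)

lemma pr_self: "d \<noteq> 0 \<Longrightarrow> pr d *v d = d"
  by (simp add: pr_mult)

lemma pr_zero_iff: "d \<noteq> 0 \<Longrightarrow> pr d *v x = 0 \<longleftrightarrow> cinner d x = 0"
  by (auto simp: pr_mult vec_eq_iff)

lemma pr_idem: "pr d ** pr d = pr d"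
proof (rule mat_eqI)
  fix x
  show "(pr d ** pr d) *v x = pr d *v x"
    by (cases "d = 0") (auto simp: pr_mult cinner_scale_right simp flip: matrix_vector_mul_assoc)
qed

lemma cnj_cinner_self: "cnj (cinner d d) = cinner d d"
  by (metis cinner_commute)

lemma pr_adj: "cadj (pr d) = pr d"
proof -
  have "cnj (d $ j * cnj (d $ i) / cinner d d) = d $ i * cnj (d $ j) / cinner d d" for i j
    by (simp add: cnj_cinner_self mult.commute)
  then show ?thesis by (simp add: cadj_def pr_def vec_eq_iff)
qed

lemma cadj_diff: "cadj (A - B) = cadj A - cadj B"
  by (simp add: cadj_def vec_eq_iff)
lemma cadj_id: "cadj (mat 1) = mat 1"
  by (simp add: cadj_def vec_eq_iff mat_def)

lemma Q_mult: "(mat 1 - (A::complex^'n::finite^'n)) *v x = x - A *v x"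
  by (simp add: matrix_vector_mult_diff_rdistrib)

lemma pr_pr: "pr d *v (pr d *v x) = pr d *v x"
  by (simp add: matrix_vector_mul_assoc pr_idem)

lemma pr_orth: "orth_proj (pr d)"
  by (simp add: orth_proj_def pr_idem pr_adj)

lemma Q_orth: "orth_proj (mat 1 - pr d)"
proof -
  have "(mat 1 - pr d) ** (mat 1 - pr d) = mat 1 - pr d"
    by (rule mat_eqI) (simp add: Q_mult matrix_vector_mult_diff_distrib pr_pr flip: matrix_vector_mul_assoc)
  then show ?thesis by (simp add: orth_proj_def cadj_diff cadj_id pr_adj)
qed

lemma pr_Q: "pr d ** (mat 1 - pr d) = 0"
  by (rule mat_eqI) (simp add: Q_mult matrix_vector_mult_diff_distrib pr_pr flip: matrix_vector_mul_assoc)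

lemma Q_pr: "(mat 1 - pr d) ** pr d = 0"
  by (rule mat_eqI) (simp add: Q_mult matrix_vector_mult_diff_distrib pr_pr flip: matrix_vector_mul_assoc)

definition Efam :: "complex^'n::finite \<Rightarrow> (complex^'n^'n) set" where
  "Efam d = {pr d, mat 1 - pr d} - {0}"

lemma pr_nz: "d \<noteq> 0 \<Longrightarrow> pr d \<noteq> 0"
  using pr_self by fastforce

lemma pr_neq_Q: fixes d :: "complex^'n::finite" shows "pr d \<noteq> mat 1 - pr d"
proof
  assume h: "pr d = mat 1 - pr d"
  then have "pr d = 0" using pr_idem pr_Q by metis
  with h have "(mat 1 :: complex^'n^'n) = 0" by simp
  then have "(mat 1 :: complex^'n^'n) $ a $ a = 0" for a by simp
  then show False by (simp add: mat_def)
qed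

lemma spectral_Efam: "d \<noteq> 0 \<Longrightarrow> spectral_family (Efam d)"
proof -
  assume d: "d \<noteq> 0"
  have s: "sum id (Efam d) = mat 1"
  proof (cases "mat 1 - pr d = 0")
    case True
    then have "Efam d = {pr d}" using pr_nz[OF d] by (auto simp: Efam_def)
    then show ?thesis using True by simp
  next
    case False
    then have "Efam d = {pr d, mat 1 - pr d}" using pr_nz[OF d] by (auto simp: Efam_def)
    then show ?thesis using pr_neq_Q[of d] by simp
  qed
  show ?thesis unfolding spectral_family_def
    using s pr_Q Q_pr pr_orth Q_orth by (auto simp: Efam_def)
qed


lemma self_in_ray: "c \<in> ray c"
  unfolding ray_def by (rule CollectI, rule exI[of _ 1]) simp

lemma ray_eq_imp: "ray c = ray c' \<Longrightarrow> \<exists>z. z \<noteq> 0 \<and> c = z *s c'"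
  using self_in_ray[of c] by (simp add: ray_def)

lemma ray_States: "ray c \<in> States \<longleftrightarrow> c \<noteq> 0"
proof
  assume "ray c \<in> States"
  then obtain c' where "ray c = ray c'" "c' \<noteq> 0" by (auto simp: States_def)
  then obtain z where "c' = z *s c" using ray_eq_imp by metis
  with \<open>c' \<noteq> 0\<close> show "c \<noteq> 0" by auto
qed (auto simp: States_def)

lemma States_ray: "p \<in> States \<Longrightarrow> \<exists>c. c \<noteq> 0 \<and> p = ray c"
  by (auto simp: States_def)

lemma mv_scale: "(P::complex^'n::finite^'m) *v (z *s c) = z *s (P *v c)"
  by (simp add: vec_eq_iff matrix_vector_mult_def sum_distrib_left algebra_simps)

lemma Out_ray: "Out E (ray c) = {P\<in>E. P *v c \<noteq> 0}"
  by (auto simp: Out_def ray_def mv_scale intro: exI[of _ 1])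

lemma corth_scale: "x \<in> corth S \<Longrightarrow> z *s x \<in> corth S"
  by (simp add: corth_def cinner_scale_right)

lemma cinner_zero_sym: "cinner c d = 0 \<longleftrightarrow> cinner d c = 0"
  by (metis cinner_commute complex_cnj_zero_iff)

lemma sum_mv: "finite E \<Longrightarrow> (sum f E) *v x = (\<Sum>P\<in>E. f P *v x)"
  by (induction E rule: finite_induct) (auto simp: matrix_vector_mult_add_rdistrib)

lemma state_orth_ray:
  assumes c: "c \<noteq> 0" and d: "d \<noteq> 0"
  shows "state_orth (ray c) (ray d) \<longleftrightarrow> cinner c d = 0"
proof
  assume "state_orth (ray c) (ray d)"
  then obtain E where E: "spectral_family E" and dis: "Out E (ray c) \<inter> Out E (ray d) = {}"
    by (auto simp: state_orth_def)
  have fin: "finite E" and sumE: "sum id E = mat 1" and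
    orth: "\<And>P. P \<in> E \<Longrightarrow> orth_proj P" and
    pq: "\<And>P Q. P \<in> E \<Longrightarrow> Q \<in> E \<Longrightarrow> P \<noteq> Q \<Longrightarrow> P ** Q = 0"
    using E by (auto simp: spectral_family_def)
  have z: "\<And>P. P \<in> E \<Longrightarrow> P *v c = 0 \<or> P *v d = 0"
    using dis by (auto simp: Out_ray)
  have cs: "c = (\<Sum>P\<in>E. P *v c)" using sum_mv[OF fin, of id c] sumE by simp
  have ds: "d = (\<Sum>P\<in>E. P *v d)" using sum_mv[OF fin, of id d] sumE by simp
  have term0: "cinner (P *v c) (Q *v d) = 0" if "P \<in> E" "Q \<in> E" for P Q
  proof (cases "P = Q")
    case True
    then show ?thesis using z[OF that(1)] by auto
  next
    case False
    have "cinner (P *v c) (Q *v d) = cinner c (cadj P *v (Q *v d))" by (rule cinner_adj)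
    also have "\<dots> = cinner c ((P ** Q) *v d)"
      using orth[OF that(1)] by (simp add: orth_proj_def matrix_vector_mul_assoc)
    also have "\<dots> = 0" using pq[OF that False] by simp
    finally show ?thesis .
  qed
  have "cinner c d = (\<Sum>P\<in>E. \<Sum>Q\<in>E. cinner (P *v c) (Q *v d))"
    apply (subst cs, subst ds)
    by (simp add: cinner_sum_left cinner_sum_right fin, rule sum.swap)
  also have "\<dots> = 0" using term0 by simp
  finally show "cinner c d = 0" .
next
  assume h: "cinner c d = 0"
  have "Out (Efam c) (ray c) \<inter> Out (Efam c) (ray d) = {}"
    using c h by (auto simp: Out_ray Efam_def pr_self Q_mult pr_zero_iff)
  then show "state_orth (ray c) (ray d)"
    using spectral_Efam[OF c] by (auto simp: state_orth_def)
qed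

lemma sorth_char:
  assumes K: "K \<subseteq> States"
  shows "sorth K = {ray c | c. c \<in> corth {c. c \<noteq> 0 \<and> ray c \<in> K} \<and> c \<noteq> 0}"
    (is "_ = {ray c | c. c \<in> corth ?L \<and> c \<noteq> 0}")
proof (rule set_eqI, rule iffI)
  fix p assume p: "p \<in> sorth K"
  then obtain c where c: "c \<noteq> 0" "p = ray c" using States_ray by (auto simp: sorth_def)
  have "c \<in> corth ?L"
  proof (unfold corth_def, rule CollectI, rule ballI)
    fix l assume "l \<in> ?L"
    then have "state_orth (ray c) (ray l)" "l \<noteq> 0" using p c by (auto simp: sorth_def)
    then show "cinner l c = 0" using state_orth_ray c cinner_zero_sym by blast
  qed
  then show "p \<in> {ray c | c. c \<in> corth ?L \<and> c \<noteq> 0}" using c by blast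
next
  fix p assume "p \<in> {ray c | c. c \<in> corth ?L \<and> c \<noteq> 0}"
  then obtain c where c: "c \<noteq> 0" "p = ray c" "c \<in> corth ?L" by blast
  have "state_orth p q" if q: "q \<in> K" for q
  proof -
    obtain l where l: "l \<noteq> 0" "q = ray l" using q K States_ray by blast
    then have "cinner l c = 0" using c q by (auto simp: corth_def)
    then show ?thesis using state_orth_ray c l cinner_zero_sym by metis
  qed
  then show "p \<in> sorth K" using c ray_States by (auto simp: sorth_def)
qed

lemma corth_minus0: "corth (S - {0}) = corth S"
  by (auto simp: corth_def)

lemma ray_in_scaleclosed:
  assumes "\<And>x z. x \<in> S \<Longrightarrow> z *s x \<in> S"
  shows "ray c \<in> {ray c' | c'. c' \<in> S \<and> c' \<noteq> 0} \<longleftrightarrow> c \<in> S \<and> c \<noteq> 0"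
proof
  assume "ray c \<in> {ray c' | c'. c' \<in> S \<and> c' \<noteq> 0}"
  then obtain c' where "ray c = ray c'" "c' \<in> S" "c' \<noteq> 0" by blast
  then show "c \<in> S \<and> c \<noteq> 0" using ray_eq_imp assms ray_States by metis
qed blast

lemma cl_orth_char:
  assumes K: "K \<subseteq> States"
  shows "cl_orth K = {ray c | c. c \<in> ccl {c. c \<noteq> 0 \<and> ray c \<in> K} \<and> c \<noteq> 0}"
proof -
  let ?L = "{c. c \<noteq> 0 \<and> ray c \<in> K}"
  have S: "sorth K \<subseteq> States" by (auto simp: sorth_def)
  have "{c. c \<noteq> 0 \<and> ray c \<in> sorth K} = corth ?L - {0}"
    using ray_in_scaleclosed[of "corth ?L"] corth_scale by (auto simp: sorth_char[OF K])
  then show ?thesis unfolding cl_orth_def sorth_char[OF S] ccl_def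
    by (simp add: corth_minus0)
qed

lemma sub_ccl: "L \<subseteq> ccl L"
  by (auto simp: ccl_def corth_def cinner_zero_sym)

lemma scaleR_vs: "(r::real) *\<^sub>R (x::complex^'n::finite) = (complex_of_real r) *s x"
  unfolding vec_eq_iff by (metis vector_scaleR_component vector_smult_component scaleR_conv_of_real)

lemma ccl_csubspace:
  assumes L: "csubspace L"
  shows "ccl L = L"
proof
  show "L \<subseteq> ccl L" by (rule sub_ccl)
  show "ccl L \<subseteq> L"
  proof
    fix x assume x: "x \<in> ccl L"
    have sub: "subspace L" using L
      by (auto simp: subspace_def csubspace_def scaleR_vs)
    obtain y z where y: "y \<in> span L" and z: "\<And>w. w \<in> span L \<Longrightarrow> orthogonal z w"
      and xyz: "x = y + z"
      using orthogonal_subspace_decomp_exists[of L x] by blast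
    have spanL: "span L = L" using sub by (simp add: span_eq_iff)
    have zc: "z \<in> corth L"
    proof (unfold corth_def, rule CollectI, rule ballI)
      fix w assume w: "w \<in> L"
      have "Re (cinner w z) = 0"
        using z[of w] w spanL by (simp add: orthogonal_def inner_Re_cinner[symmetric] inner_commute)
      moreover have "\<i> *s w \<in> L" using L w by (simp add: csubspace_def)
      then have "Re (cinner (\<i> *s w) z) = 0"
        using z[of "\<i> *s w"] spanL by (simp add: orthogonal_def inner_Re_cinner[symmetric] inner_commute)
      then have "Im (cinner w z) = 0" by (simp add: cinner_scale_left)
      ultimately show "cinner w z = 0" by (simp add: complex_eq_iff)
    qed
    have "cinner z x = 0" using x zc by (simp add: ccl_def corth_def)
    moreover have "cinner z y = 0" using zc y spanL cinner_zero_sym by (auto simp: corth_def)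
    ultimately have "cinner z z = 0" using xyz by (simp add: cinner_add_right)
    then have "z = 0" by simp
    then show "x \<in> L" using xyz y spanL by simp
  qed
qed


lemma corth_anti: "A \<subseteq> B \<Longrightarrow> corth B \<subseteq> corth A"
  by (auto simp: corth_def)

lemma corth3: "corth (corth (corth S)) = corth S"
  by (metis ccl_def corth_anti sub_ccl subset_antisym)

lemma Efam_pr: "d \<noteq> 0 \<Longrightarrow> pr d \<in> Efam d"
  using pr_nz by (auto simp: Efam_def)

lemma eig_Efam:
  assumes d: "d \<noteq> 0" and c: "c \<noteq> 0"
  shows "ray c \<in> eig (Efam d) (Efam d - {pr d}) \<longleftrightarrow> cinner d c = 0"
  using Efam_pr[OF d] pr_zero_iff[OF d] c
  by (auto simp: eig_def Out_ray ray_States)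

lemma Out_exp_Efam: "d \<noteq> 0 \<Longrightarrow> Efam d - {pr d} \<subseteq> Out_exp (Efam d)"
proof
  fix Q assume "d \<noteq> 0" and Q: "Q \<in> Efam d - {pr d}"
  then have "Q \<noteq> 0" by (auto simp: Efam_def)
  then obtain x where x: "Q *v x \<noteq> 0" using matrix_eq[of Q 0] by auto
  then have "x \<noteq> 0" by auto
  then have "ray x \<in> States" by (simp add: ray_States)
  moreover have "Q \<in> Out (Efam d) (ray x)" using Q x by (simp add: Out_ray)
  ultimately show "Q \<in> Out_exp (Efam d)" by (auto simp: Out_exp_def)
qed

definition RR :: "(complex^'n::finite^'n) set \<Rightarrow> (complex^'n^'n) set \<Rightarrow> (complex^'n) set" where
  "RR E A = {P *v y | P y. P \<in> E - A}"

lemma eig_mem: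
  assumes E: "spectral_family E" and c: "c \<noteq> 0"
  shows "ray c \<in> eig E A \<longleftrightarrow> c \<in> corth (RR E A)"
proof -
  have adj: "cadj P = P" if "P \<in> E" for P using E that by (auto simp: spectral_family_def orth_proj_def)
  have k: "P *v c = 0 \<longleftrightarrow> (\<forall>y. cinner (P *v y) c = 0)" if P: "P \<in> E" for P
  proof
    assume "P *v c = 0" then show "\<forall>y. cinner (P *v y) c = 0" by (simp add: cinner_adj adj[OF P])
  next
    assume "\<forall>y. cinner (P *v y) c = 0"
    then have "cinner (P *v (P *v c)) c = 0" by blast
    then have "cinner (P *v c) (P *v c) = 0" by (simp add: cinner_adj adj[OF P])
    then show "P *v c = 0" by simp
  qed
  show ?thesis
    using c k by (auto simp: eig_def Out_ray ray_States corth_def RR_def)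
qed

lemma eig_States: "eig E A \<subseteq> States" by (auto simp: eig_def)

lemma Feig_sub: "F_eig \<subseteq> F_orth"
proof
  fix K assume "K \<in> F_eig"
  then obtain \<F> where F: "\<F> \<subseteq> {eig E A | E A. spectral_family E \<and> A \<subseteq> Out_exp E}"
    and K: "K = States \<inter> \<Inter>\<F>" by (auto simp: F_eig_def)
  have KS: "K \<subseteq> States" using K by auto
  let ?L = "{c. c \<noteq> 0 \<and> ray c \<in> K}"
  have "cl_orth K = K"
  proof
    show "cl_orth K \<subseteq> K"
    proof
      fix p assume "p \<in> cl_orth K"
      then obtain c where p: "p = ray c" "c \<in> ccl ?L" "c \<noteq> 0" by (auto simp: cl_orth_char[OF KS])
      have "p \<in> f" if f: "f \<in> \<F>" for f
      proof -
        obtain E A where fE: "f = eig E A" "spectral_family E" using F f by blast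
        have "?L \<subseteq> corth (RR E A)"
        proof
          fix l assume "l \<in> ?L"
          then have "ray l \<in> f" "l \<noteq> 0" using K f by auto
          then show "l \<in> corth (RR E A)" using eig_mem fE by blast
        qed
        then have "ccl ?L \<subseteq> corth (RR E A)"
          unfolding ccl_def by (metis corth3 corth_anti)
        then show ?thesis using p eig_mem fE by blast
      qed
      then show "p \<in> K" using K p ray_States by auto
    qed
  next
    show "K \<subseteq> cl_orth K"
    proof
      fix p assume "p \<in> K"
      then obtain c where "c \<noteq> 0" "p = ray c" using KS States_ray by blast
      then show "p \<in> cl_orth K" using \<open>p \<in> K\<close> sub_ccl[of ?L]
        by (auto simp: cl_orth_char[OF KS])
    qed
  qed
  then show "K \<in> F_orth" using KS by (simp add: F_orth_def)
qed

lemma Forth_sub: "F_orth \<subseteq> F_eig"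
proof
  fix K assume "K \<in> F_orth"
  then have KS: "K \<subseteq> States" and Kc: "cl_orth K = K" by (auto simp: F_orth_def)
  let ?L = "{c. c \<noteq> 0 \<and> ray c \<in> K}"
  have Keq: "K = {ray c | c. c \<in> ccl ?L \<and> c \<noteq> 0}" using Kc cl_orth_char[OF KS] by simp
  define \<F> where "\<F> = (\<lambda>d. eig (Efam d) (Efam d - {pr d})) ` (corth ?L - {0})"
  have "\<F> \<subseteq> {eig E A | E A. spectral_family E \<and> A \<subseteq> Out_exp E}"
    unfolding \<F>_def using spectral_Efam Out_exp_Efam by blast
  moreover have "K = States \<inter> \<Inter>\<F>"
  proof (rule set_eqI)
    fix p
    show "p \<in> K \<longleftrightarrow> p \<in> States \<inter> \<Inter>\<F>"
    proof (cases "p \<in> States")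
      case True
      then obtain c where c: "c \<noteq> 0" "p = ray c" using States_ray by blast
      have sc: "\<And>x z. x \<in> ccl ?L \<Longrightarrow> z *s x \<in> ccl ?L" unfolding ccl_def by (rule corth_scale)
      have "p \<in> K \<longleftrightarrow> c \<in> ccl ?L"
        using ray_in_scaleclosed[of "ccl ?L" c, OF sc] c Keq by auto
      also have "\<dots> \<longleftrightarrow> (\<forall>d\<in>corth ?L - {0}. cinner d c = 0)"
        by (auto simp: ccl_def corth_def[of "corth _"])
      also have "\<dots> \<longleftrightarrow> p \<in> \<Inter>\<F>"
        using eig_Efam c by (auto simp: \<F>_def)
      finally show ?thesis using True by simp
    next
      case False
      then show ?thesis using KS by auto
    qed
  qed
  ultimately show "K \<in> F_eig" by (auto simp: F_eig_def)
qed

theorem mainTheorem17: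
  fixes dummy :: "'n::finite"
  shows "(\<forall>K::(complex^'n) set set. K \<subseteq> States \<longrightarrow>
            (let L = {c. c \<noteq> 0 \<and> ray c \<in> K} in
               sorth K = {ray c | c. c \<in> corth L \<and> c \<noteq> 0}
             \<and> cl_orth K = {ray c | c. c \<in> ccl L \<and> c \<noteq> 0}))
       \<and> (\<forall>L::(complex^'n) set. csubspace L \<and> closed L \<longrightarrow>
            {ray c | c. c \<in> L \<and> c \<noteq> 0} \<in> F_orth)
       \<and> (F_eig :: (complex^'n) set set set) = F_orth"
proof (intro conjI allI impI)
  fix K :: "(complex^'n) set set" assume "K \<subseteq> States"
  then show "let L = {c. c \<noteq> 0 \<and> ray c \<in> K} in
               sorth K = {ray c | c. c \<in> corth L \<and> c \<noteq> 0}
             \<and> cl_orth K = {ray c | c. c \<in> ccl L \<and> c \<noteq> 0}"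
    unfolding Let_def using sorth_char cl_orth_char by blast
next
  fix L :: "(complex^'n) set" assume "csubspace L \<and> closed L"
  then have L: "csubspace L" by simp
  let ?F = "{ray c | c. c \<in> L \<and> c \<noteq> 0}"
  have FS: "?F \<subseteq> States" using ray_States by auto
  have sc: "\<And>x z. x \<in> L \<Longrightarrow> z *s x \<in> L" using L by (simp add: csubspace_def)
  have "{c. c \<noteq> 0 \<and> ray c \<in> ?F} = L - {0}"
    using ray_in_scaleclosed[of L, OF sc] by auto
  then have "cl_orth ?F = ?F"
    using cl_orth_char[OF FS] ccl_csubspace[OF L] by (simp add: ccl_def corth_minus0)
  then show "?F \<in> F_orth" using FS by (simp add: F_orth_def)
next
  show "(F_eig :: (complex^'n) set set set) = F_orth" using Feig_sub Forth_sub by blast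
qed

end
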